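(* Let $n\ge2$ and $\mathbf b=(b_1,\dots,b_{n-1})\in\mathbb R^{n-1}$ with $\mathbf b\notin\mathcal W^+_n(1,n-1)$. Then the map $\mathbb R\to\mathbb R^n$, $x\mapsto(x,b_1x,\dots,b_{n-1}x)$, is extremal.
   Context: Sup-norms. For a row vector $\mathbf y\in\mathbb R^k$ and $v>0$, $\mathbf y\in\mathcal W_v(1,k)$ if there are infinitely many $\mathbf q\in\mathbb Z^k$ with $|\mathbf y\mathbf q+p|\le\|\mathbf q\|^{-v}$ for some $p\in\mathbb Z$; $\mathcal W^+_v(1,k)=\bigcup_{u>v}\mathcal W_u(1,k)$. $\mathbf y\in\mathbb R^n$ is very well approximable (VWA) if $\mathbf y\in\mathcal W_v(1,n)$ for some $v>n$; a map is extremal if almost every point of its domain is mapped to a non-VWA vector. *)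

theory Defs
  imports "HOL-Analysis.Analysis"
begin

text \<open>Vectors in R^k / Z^k are represented as functions on nat; only the
indices i < k are relevant.  Integer vectors are required to vanish for i >= k,
so that distinct functions correspond to distinct vectors of Z^k.\<close>

definition supnorm :: "nat \<Rightarrow> (nat \<Rightarrow> int) \<Rightarrow> real" where
  "supnorm k q = (MAX i \<in> {..<k}. \<bar>real_of_int (q i)\<bar>)"

definition W :: "real \<Rightarrow> nat \<Rightarrow> (nat \<Rightarrow> real) set" where
  "W v k = {y. infinite {q :: nat \<Rightarrow> int. (\<forall>i\<ge>k. q i = 0) \<and>
      (\<exists>p :: int. \<bar>(\<Sum>i<k. y i * real_of_int (q i)) + real_of_int p\<bar>
                    \<le> supnorm k q powr (- v))}}"

definition W_plus :: "real \<Rightarrow> nat \<Rightarrow> (nat \<Rightarrow> real) set" where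
  "W_plus v k = (\<Union>u \<in> {u. u > v}. W u k)"

definition VWA :: "nat \<Rightarrow> (nat \<Rightarrow> real) \<Rightarrow> bool" where
  "VWA n y \<longleftrightarrow> (\<exists>v > real n. y \<in> W v n)"

definition extremal :: "nat \<Rightarrow> (real \<Rightarrow> (nat \<Rightarrow> real)) \<Rightarrow> bool" where
  "extremal n f \<longleftrightarrow> (AE x in lborel. \<not> VWA n (f x))"

end

theory Submission
  imports Defs
begin

lemma sn_ge: "i < k \<Longrightarrow> \<bar>real_of_int (q i)\<bar> \<le> supnorm k q"
  unfolding supnorm_def by (rule Max_ge) auto

lemma sn_le: "0 < k \<Longrightarrow> (\<And>i. i < k \<Longrightarrow> \<bar>real_of_int (q i)\<bar> \<le> B) \<Longrightarrow> supnorm k q \<le> B"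
  unfolding supnorm_def by (subst Max_le_iff) auto

lemma sn_attained: "0 < k \<Longrightarrow> \<exists>i<k. supnorm k q = \<bar>real_of_int (q i)\<bar>"
proof -
  assume "0 < k"
  then have "supnorm k q \<in> (\<lambda>i. \<bar>real_of_int (q i)\<bar>) ` {..<k}"
    unfolding supnorm_def by (intro Max_in) auto
  then show ?thesis by auto
qed

lemma sn_nonneg: "0 < k \<Longrightarrow> 0 \<le> supnorm k q"
  using sn_ge[of 0 k q] by linarith

lemma sn_ge1:
  assumes "\<forall>i\<ge>k. q i = 0" "q \<noteq> (\<lambda>_. 0)"
  shows "supnorm k q \<ge> 1"
proof -
  obtain j where j: "q j \<noteq> 0" using assms(2) by auto
  with assms(1) have "j < k" by (meson not_le)
  have "1 \<le> \<bar>real_of_int (q j)\<bar>" using j by linarith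
  also have "\<dots> \<le> supnorm k q" by (rule sn_ge[OF \<open>j < k\<close>])
  finally show ?thesis .
qed

lemma W_mono:
  assumes "u \<le> v" shows "W v k \<subseteq> W u k"
proof
  fix y assume "y \<in> W v k"
  let ?S = "\<lambda>v. {q :: nat \<Rightarrow> int. (\<forall>i\<ge>k. q i = 0) \<and>
      (\<exists>p :: int. \<bar>(\<Sum>i<k. y i * real_of_int (q i)) + real_of_int p\<bar>
                    \<le> supnorm k q powr (- v))}"
  have inf: "infinite (?S v)" using \<open>y \<in> W v k\<close> unfolding W_def by simp
  have "?S v \<subseteq> ?S u \<union> {\<lambda>_. 0}"
  proof
    fix q assume q: "q \<in> ?S v"
    show "q \<in> ?S u \<union> {\<lambda>_. 0}"
    proof (cases "q = (\<lambda>_. 0)")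
      case False
      have "supnorm k q \<ge> 1" using sn_ge1[OF _ False] q by auto
      then have "supnorm k q powr (-v) \<le> supnorm k q powr (-u)"
        using assms by (intro powr_mono) auto
      then show ?thesis using q by (auto intro: order_trans)
    qed simp
  qed
  then have "infinite (?S u)" using inf
    by (metis (no_types, lifting) finite.emptyI finite_Un finite_insert finite_subset)
  then show "y \<in> W u k" unfolding W_def by simp
qed


lemma box_finite: "finite {q::nat\<Rightarrow>int. (\<forall>i\<ge>k. q i = 0) \<and> (\<forall>i<k. \<bar>q i\<bar> \<le> N)}"
proof -
  have "{q::nat\<Rightarrow>int. (\<forall>i\<ge>k. q i = 0) \<and> (\<forall>i<k. \<bar>q i\<bar> \<le> N)}
      = {f. \<forall>x. (x \<in> {..<k} \<longrightarrow> f x \<in> {-N..N}) \<and> (x \<notin> {..<k} \<longrightarrow> f x = 0)}"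
    by (auto simp: abs_le_iff not_less)
  then show ?thesis using finite_set_of_finite_funs[of "{..<k}" "{-N..N}" 0] by simp
qed

lemma box_sum_prod:
  fixes g :: "int \<Rightarrow> real"
  shows "(\<Sum>q\<in>{q::nat\<Rightarrow>int. (\<forall>i\<ge>k. q i = 0) \<and> (\<forall>i<k. \<bar>q i\<bar> \<le> N)}. \<Prod>i<k. g (q i))
       = (\<Sum>z\<in>{-N..N}. g z) ^ k"
proof -
  have "(\<Sum>z\<in>{-N..N}. g z) ^ k = (\<Prod>i<k. \<Sum>z\<in>{-N..N}. g z)" by simp
  also have "\<dots> = (\<Sum>h\<in>PiE {..<k} (\<lambda>_. {-N..N}). \<Prod>i<k. g (h i))"
    by (rule prod_sum_PiE) auto
  also have "\<dots> = (\<Sum>q\<in>{q::nat\<Rightarrow>int. (\<forall>i\<ge>k. q i = 0) \<and> (\<forall>i<k. \<bar>q i\<bar> \<le> N)}. \<Prod>i<k. g (q i))"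
    by (rule sum.reindex_bij_witness[of _ "\<lambda>q. restrict q {..<k}" "\<lambda>h j. if j < k then h j else 0"])
       (auto simp: PiE_def Pi_def extensional_def abs_le_iff not_less fun_eq_iff)
  finally show ?thesis by simp
qed

lemma sum_sym_le:
  fixes g :: "int \<Rightarrow> real"
  assumes "\<And>z. g z \<ge> 0" "\<And>z. g (-z) = g z"
  shows "(\<Sum>z\<in>{-int N..int N}. g z) \<le> 2 * (\<Sum>m\<le>N. g (int m))"
proof -
  have U: "{-int N..int N} = {0..int N} \<union> {-int N..0}" by auto
  have "(\<Sum>z\<in>{-int N..int N}. g z) + (\<Sum>z\<in>{0..int N} \<inter> {-int N..0}. g z)
        = (\<Sum>z\<in>{0..int N}. g z) + (\<Sum>z\<in>{-int N..0}. g z)"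
    unfolding U by (rule sum.union_inter) auto
  moreover have "(\<Sum>z\<in>{0..int N} \<inter> {-int N..0}. g z) \<ge> 0" by (intro sum_nonneg assms)
  moreover have "(\<Sum>z\<in>{0..int N}. g z) = (\<Sum>m\<le>N. g (int m))"
    by (rule sum.reindex_bij_witness[of _ int nat]) auto
  moreover have "(\<Sum>z\<in>{-int N..0}. g z) = (\<Sum>m\<le>N. g (int m))"
    by (rule sum.reindex_bij_witness[of _ "\<lambda>m. - int m" "\<lambda>z. nat (-z)"]) (auto simp: assms)
  ultimately show ?thesis by linarith
qed

lemma norm_sum_bound:
  fixes v :: real and k :: nat
  assumes k: "0 < k" and v: "v > real k"
  shows "\<exists>C. \<forall>F. finite F \<longrightarrow> F \<subseteq> {q::nat\<Rightarrow>int. (\<forall>i\<ge>k. q i = 0) \<and> q \<noteq> (\<lambda>_. 0)} \<longrightarrow>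
           (\<Sum>q\<in>F. supnorm k q powr (-v)) \<le> C"
proof -
  define s where "s = v / real k"
  have s1: "s > 1" using k v unfolding s_def by (simp add: field_simps)
  have sk: "s * real k = v" using k unfolding s_def by simp
  define g where "g = (\<lambda>z::int. (1 + \<bar>real_of_int z\<bar>) powr (-s))"
  have g0: "g z \<ge> 0" for z unfolding g_def by simp
  have gsym: "g (-z) = g z" for z unfolding g_def by simp
  have summ: "summable (\<lambda>m. g (int m))"
  proof -
    have "summable (\<lambda>m. real m powr (-s))" using s1 summable_real_powr_iff by simp
    then have "summable (\<lambda>m. real (Suc m) powr (-s))" by (subst summable_Suc_iff)
    then show ?thesis unfolding g_def by (simp add: add.commute)
  qed
  define S where "S = (\<Sum>m. g (int m))"
  have gS: "(\<Sum>z\<in>{-int N..int N}. g z) \<le> 2 * S" for N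
  proof -
    have "(\<Sum>m\<le>N. g (int m)) \<le> S" unfolding S_def
      by (rule sum_le_suminf[OF summ]) (auto simp: g0)
    then show ?thesis using sum_sym_le[of g N, OF g0 gsym] by linarith
  qed
  have pt: "supnorm k q powr (-v) \<le> 2 powr v * (\<Prod>i<k. g (q i))"
    if q: "\<forall>i\<ge>k. q i = 0" "q \<noteq> (\<lambda>_. 0)" for q
  proof -
    define M where "M = supnorm k q"
    have M1: "M \<ge> 1" unfolding M_def by (rule sn_ge1[OF q])
    have "(\<Prod>i<k. (2*M) powr (-s)) \<le> (\<Prod>i<k. g (q i))"
    proof (rule prod_mono)
      fix i assume "i \<in> {..<k}"
      then have "\<bar>real_of_int (q i)\<bar> \<le> M" unfolding M_def by (intro sn_ge) auto
      then show "0 \<le> (2*M) powr (-s) \<and> (2*M) powr (-s) \<le> g (q i)"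
        unfolding g_def using s1 M1 by (auto intro!: powr_mono2')
    qed
    moreover have "(\<Prod>i<k. (2*M) powr (-s)) = (2*M) powr (-v)"
    proof -
      have "(\<Prod>i<k. (2*M) powr (-s)) = ((2*M) powr (-s)) ^ k" by simp
      also have "\<dots> = ((2*M) powr (-s)) powr (real k)"
        using M1 by (subst powr_realpow) auto
      also have "\<dots> = (2*M) powr (-v)" using sk by (simp add: powr_powr)
      finally show ?thesis .
    qed
    moreover have "(2*M) powr (-v) = 2 powr (-v) * M powr (-v)"
      using M1 by (simp add: powr_mult)
    ultimately have "2 powr (-v) * M powr (-v) \<le> (\<Prod>i<k. g (q i))" by simp
    then have "2 powr v * (2 powr (-v) * M powr (-v)) \<le> 2 powr v * (\<Prod>i<k. g (q i))"
      by (intro mult_left_mono) auto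
    moreover have "2 powr v * (2 powr (-v) * M powr (-v)) = M powr (-v)"
      by (simp add: powr_minus field_simps)
    ultimately show ?thesis unfolding M_def by simp
  qed
  show ?thesis
  proof (intro exI allI impI)
    fix F :: "(nat\<Rightarrow>int) set" assume F: "finite F" "F \<subseteq> {q. (\<forall>i\<ge>k. q i = 0) \<and> q \<noteq> (\<lambda>_. 0)}"
    define N where "N = (\<Sum>q\<in>F. \<Sum>i<k. \<bar>q i\<bar>)"
    define B where "B = {q::nat\<Rightarrow>int. (\<forall>i\<ge>k. q i = 0) \<and> (\<forall>i<k. \<bar>q i\<bar> \<le> N)}"
    have N0: "N \<ge> 0" unfolding N_def by (intro sum_nonneg) auto
    have FB: "F \<subseteq> B"
    proof
      fix q assume q: "q \<in> F"
      have "\<bar>q i\<bar> \<le> N" if "i < k" for i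
      proof -
        have "\<bar>q i\<bar> \<le> (\<Sum>i<k. \<bar>q i\<bar>)" using that by (intro member_le_sum) auto
        also have "\<dots> \<le> N" unfolding N_def using q F(1)
          by (intro member_le_sum[of q F "\<lambda>q. \<Sum>i<k. \<bar>q i\<bar>"]) (auto intro: sum_nonneg)
        finally show ?thesis .
      qed
      then show "q \<in> B" using q F(2) unfolding B_def by auto
    qed
    have "(\<Sum>q\<in>F. supnorm k q powr (-v)) \<le> (\<Sum>q\<in>F. 2 powr v * (\<Prod>i<k. g (q i)))"
      using F(2) by (intro sum_mono pt) auto
    also have "\<dots> \<le> (\<Sum>q\<in>B. 2 powr v * (\<Prod>i<k. g (q i)))"
      using FB unfolding B_def by (intro sum_mono2 box_finite) (auto intro!: prod_nonneg g0 mult_nonneg_nonneg)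
    also have "\<dots> = 2 powr v * (\<Sum>z\<in>{-N..N}. g z) ^ k"
      unfolding B_def by (simp add: sum_distrib_left[symmetric] box_sum_prod)
    also have "\<dots> \<le> 2 powr v * (2 * S) ^ k"
    proof -
      have "(\<Sum>z\<in>{-N..N}. g z) \<le> 2 * S" using gS[of "nat N"] N0 by simp
      then show ?thesis by (intro mult_left_mono power_mono) (auto intro: sum_nonneg g0)
    qed
    finally show "(\<Sum>q\<in>F. supnorm k q powr (-v)) \<le> 2 powr v * (2 * S) ^ k" .
  qed
qed


definition rr :: "(nat \<Rightarrow> real) \<Rightarrow> nat \<Rightarrow> (nat \<Rightarrow> int) \<Rightarrow> real" where
  "rr b m q = real_of_int (q 0) + (\<Sum>i<m. b i * real_of_int (q (Suc i)))"

lemma powr_le1: "(x::real) \<ge> 1 \<Longrightarrow> e \<ge> 0 \<Longrightarrow> x powr (-e) \<le> 1"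
  using powr_mono2'[of "-e" 1 x] by simp

lemma bad_finite:
  fixes b :: "nat \<Rightarrow> real" and m :: nat and v a :: real
  assumes m: "0 < m" and b: "b \<notin> W_plus (real (Suc m)) m" and v: "v > real (Suc m)" and a: "a > 0"
  shows "finite {q::nat\<Rightarrow>int. (\<forall>i\<ge>Suc m. q i = 0) \<and> (supnorm (Suc m) q < 2 \<or>
            \<bar>rr b m q\<bar> \<le> supnorm (Suc m) q powr (-v) / a)}"
proof -
  define u where "u = (real (Suc m) + v) / 2"
  have u: "u > real (Suc m)" "u < v" using v unfolding u_def by auto
  have "b \<notin> W u m" using b u unfolding W_plus_def by auto
  then have Wfin: "finite {q :: nat \<Rightarrow> int. (\<forall>i\<ge>m. q i = 0) \<and>
      (\<exists>p :: int. \<bar>(\<Sum>i<m. b i * real_of_int (q i)) + real_of_int p\<bar>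
                    \<le> supnorm m q powr (- u))}" (is "finite ?Wq")
    unfolding W_def by simp
  define N1 where "N1 = (\<Sum>q'\<in>?Wq. supnorm m q')"
  have N1: "supnorm m q' \<le> N1" if "q' \<in> ?Wq" for q'
    unfolding N1_def using that Wfin by (intro member_le_sum sn_nonneg m)
  have "((\<lambda>s::real. s powr (u - v)) \<longlongrightarrow> 0) at_top"
    using u by (intro tendsto_neg_powr filterlim_ident) auto
  then have "eventually (\<lambda>s::real. s powr (u - v) < a) at_top"
    using a by (intro order_tendstoD) auto
  then obtain N0 where N0: "\<And>s. s \<ge> N0 \<Longrightarrow> s powr (u - v) < a"
    by (auto simp: eventually_at_top_linorder)
  define N2 where "N2 = max (max N0 N1) 1"
  have N2ge: "N2 \<ge> 1" unfolding N2_def by simp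
  define L where "L = (\<Sum>i<m. \<bar>b i\<bar> * N2)"
  have L0: "L \<ge> 0" unfolding L_def using N2ge by (intro sum_nonneg) auto
  define N where "N = \<lceil>max N2 (1/a + L) + 2\<rceil>"
  have Nge: "max N2 (1/a + L) + 2 \<le> real_of_int N" unfolding N_def by (rule le_of_int_ceiling)
  have sub: "{q::nat\<Rightarrow>int. (\<forall>i\<ge>Suc m. q i = 0) \<and> (supnorm (Suc m) q < 2 \<or>
            \<bar>rr b m q\<bar> \<le> supnorm (Suc m) q powr (-v) / a)}
     \<subseteq> {q::nat\<Rightarrow>int. (\<forall>i\<ge>Suc m. q i = 0) \<and> (\<forall>i<Suc m. \<bar>q i\<bar> \<le> N)}"
  proof
    fix q :: "nat \<Rightarrow> int"
    assume qS: "q \<in> {q::nat\<Rightarrow>int. (\<forall>i\<ge>Suc m. q i = 0) \<and> (supnorm (Suc m) q < 2 \<or>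
            \<bar>rr b m q\<bar> \<le> supnorm (Suc m) q powr (-v) / a)}"
    then have q0: "\<forall>i\<ge>Suc m. q i = 0"
      and c: "supnorm (Suc m) q < 2 \<or> \<bar>rr b m q\<bar> \<le> supnorm (Suc m) q powr (-v) / a" by auto
    have "\<bar>q i\<bar> \<le> N" if i: "i < Suc m" for i
    proof -
    define nq where "nq = supnorm (Suc m) q"
    have qi: "\<bar>real_of_int (q i)\<bar> \<le> nq" unfolding nq_def using i by (rule sn_ge)
    have "real_of_int \<bar>q i\<bar> \<le> real_of_int N"
    proof (cases "nq < 2")
      case True
      have "real_of_int N \<ge> 2" unfolding N_def using N2ge L0 a by linarith
      then show ?thesis using qi True by linarith
    next
      case False
      then have nq2: "nq \<ge> 2" by simp
      with c have r: "\<bar>rr b m q\<bar> \<le> nq powr (-v) / a" unfolding nq_def by auto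
      define q' where "q' = (\<lambda>j. q (Suc j))"
      have q'0: "\<forall>j\<ge>m. q' j = 0" unfolding q'_def using q0 by auto
      define s where "s = supnorm m q'"
      have s_le: "s \<le> nq" unfolding s_def q'_def nq_def
        using m by (intro sn_le) (auto intro: sn_ge)
      have s0: "s \<ge> 0" unfolding s_def using m by (rule sn_nonneg)
      have sN2: "s \<le> N2"
      proof (cases "s \<le> max N0 1")
        case True then show ?thesis unfolding N2_def by linarith
      next
        case False
        then have s1: "s \<ge> 1" "s > 0" "s \<ge> N0" by auto
        have "\<bar>(\<Sum>j<m. b j * real_of_int (q' j)) + real_of_int (q 0)\<bar> = \<bar>rr b m q\<bar>"
          unfolding rr_def q'_def by simp
        also have "\<dots> \<le> nq powr (-v) / a" by (rule r)
        also have "\<dots> \<le> s powr (-v) / a"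
          using s1 s_le a v by (intro divide_right_mono powr_mono2') auto
        also have "\<dots> = s powr (-u) * (s powr (u - v) / a)"
          using s1 by (simp add: powr_add[symmetric])
        also have "\<dots> \<le> s powr (-u) * 1"
          using N0[OF s1(3)] a by (intro mult_left_mono) auto
        finally have ex: "\<bar>(\<Sum>j<m. b j * real_of_int (q' j)) + real_of_int (q 0)\<bar> \<le> supnorm m q' powr (-u)"
          unfolding s_def by simp
        have "q' \<in> ?Wq" using q'0 ex by blast
        then have "s \<le> N1" unfolding s_def by (rule N1)
        moreover have "N1 \<le> N2" by (simp add: N2_def)
        ultimately show ?thesis by linarith
      qed
      show ?thesis
      proof (cases i)
        case 0
        have "\<bar>\<Sum>j<m. b j * real_of_int (q (Suc j))\<bar> \<le> (\<Sum>j<m. \<bar>b j\<bar> * N2)"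
        proof -
          have "\<bar>\<Sum>j<m. b j * real_of_int (q (Suc j))\<bar> \<le> (\<Sum>j<m. \<bar>b j * real_of_int (q (Suc j))\<bar>)"
            by (rule sum_abs)
          also have "\<dots> \<le> (\<Sum>j<m. \<bar>b j\<bar> * N2)"
          proof (rule sum_mono)
            fix j assume "j \<in> {..<m}"
            then have "\<bar>real_of_int (q' j)\<bar> \<le> s" unfolding s_def by (intro sn_ge) auto
            then show "\<bar>b j * real_of_int (q (Suc j))\<bar> \<le> \<bar>b j\<bar> * N2"
              using sN2 unfolding q'_def by (simp add: abs_mult mult_left_mono)
          qed
          finally show ?thesis .
        qed
        moreover have "nq powr (-v) \<le> 1" using nq2 v by (intro powr_le1) auto
        then have "nq powr (-v) / a \<le> 1 / a" using a by (intro divide_right_mono) auto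
        ultimately have "\<bar>real_of_int (q 0)\<bar> \<le> 1/a + L"
          using r unfolding rr_def L_def by linarith
        then show ?thesis using 0 Nge by simp
      next
        case (Suc j)
        then have "\<bar>real_of_int (q' j)\<bar> \<le> s" unfolding s_def using i by (intro sn_ge) auto
        then have "\<bar>real_of_int (q i)\<bar> \<le> N2" using sN2 Suc unfolding q'_def by simp
        then show ?thesis using Nge by simp
      qed
    qed
    then show "\<bar>q i\<bar> \<le> N" by linarith
    qed
    then show "q \<in> {q::nat\<Rightarrow>int. (\<forall>i\<ge>Suc m. q i = 0) \<and> (\<forall>i<Suc m. \<bar>q i\<bar> \<le> N)}"
      using q0 by auto
  qed
  show ?thesis by (rule finite_subset[OF sub box_finite])
qed


definition Tset :: "real \<Rightarrow> real \<Rightarrow> real \<Rightarrow> real set" where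
  "Tset M r d = (if \<bar>r\<bar> \<ge> 1/(2*M) then
     (\<Union>p\<in>{-(\<lceil>M*\<bar>r\<bar>\<rceil>+1)..\<lceil>M*\<bar>r\<bar>\<rceil>+1}. {(-real_of_int p - d)/\<bar>r\<bar> .. (-real_of_int p + d)/\<bar>r\<bar>}) else {})"

lemma Tset_sets: "Tset M r d \<in> sets lborel"
  unfolding Tset_def by (auto intro!: borel_closed closed_UN)

lemma Tset_fin: "emeasure lborel (Tset M r d) < \<infinity>"
  unfolding Tset_def
  by (cases "\<bar>r\<bar> \<ge> 1/(2*M)", simp_all only: if_True if_False)
     (rule emeasure_compact_finite, rule compact_UN, auto)

lemma Tset_measure:
  assumes M: "M > 0" and d: "d \<ge> 0"
  shows "measure lborel (Tset M r d) \<le> 24 * M * d"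
proof (cases "\<bar>r\<bar> \<ge> 1/(2*M)")
  case False
  then show ?thesis unfolding Tset_def using M d by simp
next
  case True
  define R where "R = \<bar>r\<bar>"
  have R: "R > 0" "R \<ge> 1/(2*M)" using True M unfolding R_def by (auto intro: less_le_trans[of 0 "1/(2*M)"])
  define K where "K = \<lceil>M*R\<rceil>+1"
  have K: "real_of_int K \<le> M*R + 2" unfolding K_def by linarith
  have K0: "K \<ge> 1" unfolding K_def using R M by (smt (verit) ceiling_le_zero mult_pos_pos)
  have "measure lborel (Tset M r d) = measure lborel (\<Union>p\<in>{-K..K}. {(-real_of_int p - d)/R .. (-real_of_int p + d)/R})"
    unfolding Tset_def K_def R_def using True by simp
  also have "\<dots> \<le> (\<Sum>p\<in>{-K..K}. measure lborel {(-real_of_int p - d)/R .. (-real_of_int p + d)/R})"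
    by (rule measure_UNION_le) auto
  also have "\<dots> = (\<Sum>p\<in>{-K..K}. 2*d/R)"
  proof (rule sum.cong)
    fix p assume "p \<in> {-K..K}"
    have "(-real_of_int p - d)/R \<le> (-real_of_int p + d)/R" using R d by (intro divide_right_mono) auto
    then show "measure lborel {(-real_of_int p - d)/R .. (-real_of_int p + d)/R} = 2*d/R"
      by (simp add: diff_divide_distrib add_divide_distrib)
  qed simp
  also have "\<dots> = real_of_int (2*K+1) * (2*d/R)" using K0 by simp
  also have "\<dots> \<le> (2*(M*R+2)+1) * (2*d/R)"
    using K d R by (intro mult_right_mono) auto
  also have "\<dots> = 4*M*d + 10*d/R" using R by (simp add: field_simps)
  also have "\<dots> \<le> 4*M*d + 20*M*d"
  proof -
    have "1/R \<le> 2*M" using R M by (simp add: field_simps)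
    then have "d * (1/R) \<le> d * (2*M)" using d by (intro mult_left_mono) auto
    moreover have "10*d/R = 10 * (d * (1/R))" by simp
    moreover have "d * (2*M) = 2*(M*d)" "20*M*d = 20*(M*d)" "4*M*d = 4*(M*d)" by simp_all
    ultimately show ?thesis by linarith
  qed
  finally show ?thesis by simp
qed

lemma Tset_cover:
  assumes M: "M > 0" and a: "a > 0" and d: "0 \<le> d" "d \<le> 1/2" and r: "\<bar>r\<bar> > d / a"
    and x: "a \<le> \<bar>x\<bar>" "\<bar>x\<bar> \<le> M" and p: "\<bar>x * r + real_of_int p\<bar> \<le> d"
  shows "x \<in> Tset M r d"
proof -
  define R where "R = \<bar>r\<bar>"
  have R0: "R > 0" using r d a unfolding R_def by (smt (verit) divide_nonneg_pos)
  have RM: "R \<ge> 1/(2*M)"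
  proof (rule ccontr)
    assume "\<not> R \<ge> 1/(2*M)"
    then have Rs: "R * M < 1/2" using M by (simp add: field_simps)
    have xr: "\<bar>x * r\<bar> \<le> M * R" unfolding R_def abs_mult using x by (intro mult_right_mono) auto
    show False
    proof (cases "p = 0")
      case True
      then have "\<bar>x\<bar> * R \<le> d" using p unfolding R_def by (simp add: abs_mult)
      moreover have "a * R \<le> \<bar>x\<bar> * R" using x R0 by (intro mult_right_mono) auto
      ultimately have "R \<le> d / a" using a by (simp add: field_simps)
      then show False using r unfolding R_def by simp
    next
      case False
      then have "\<bar>real_of_int p\<bar> \<ge> 1" by linarith
      moreover have "M * R < 1/2" using Rs by (simp add: mult.commute)
      ultimately show False using p xr d by linarith
    qed
  qed
  define p' where "p' = (if r \<ge> 0 then p else -p)"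
  have p': "\<bar>x * R + real_of_int p'\<bar> \<le> d"
    using p unfolding p'_def R_def by (cases "r \<ge> 0") (auto simp: abs_minus_commute)
  have "\<bar>real_of_int p\<bar> \<le> M * R + 1"
  proof -
    have xr: "\<bar>x * r\<bar> \<le> M * R" unfolding R_def abs_mult using x by (intro mult_right_mono) auto
    then show ?thesis using p d by linarith
  qed
  then have pK: "\<bar>p'\<bar> \<le> \<lceil>M*R\<rceil>+1" unfolding p'_def by (cases "r \<ge> 0") (auto, linarith+)
  have "x \<in> {(-real_of_int p' - d)/R .. (-real_of_int p' + d)/R}"
    using p' R0 by (auto simp: field_simps abs_le_iff)
  then show ?thesis unfolding Tset_def using RM pK unfolding R_def
    by (auto simp: abs_le_iff intro!: bexI[of _ p'])
qed


lemma dot_eq: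
  "(\<Sum>i<Suc m. (if i = 0 then x else b (i - 1) * x) * real_of_int (q i)) = x * rr b m q"
  unfolding rr_def by (subst sum.lessThan_Suc_shift) (simp add: sum_distrib_left algebra_simps)

lemma delta_small:
  fixes s v :: real
  assumes "s \<ge> 2" "v \<ge> 1" shows "s powr (-v) \<le> 1/2"
proof -
  have "s powr (-v) \<le> 2 powr (-v)" using assms by (intro powr_mono2') auto
  also have "\<dots> \<le> 2 powr (-1)" using assms by (intro powr_mono) auto
  also have "\<dots> = 1/2" by (simp add: powr_minus)
  finally show ?thesis .
qed

lemma Qs_countable: "countable {q::nat\<Rightarrow>int. \<forall>i\<ge>k. q i = 0}"
proof -
  have "{q::nat\<Rightarrow>int. \<forall>i\<ge>k. q i = 0} \<subseteq> (\<Union>N::nat. {q::nat\<Rightarrow>int. (\<forall>i\<ge>k. q i = 0) \<and> (\<forall>i<k. \<bar>q i\<bar> \<le> int N)})"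
  proof
    fix q :: "nat \<Rightarrow> int" assume q: "q \<in> {q. \<forall>i\<ge>k. q i = 0}"
    have "\<forall>i<k. \<bar>q i\<bar> \<le> int (nat (\<Sum>i<k. \<bar>q i\<bar>))"
    proof (intro allI impI)
      fix i assume "i < k"
      then have "\<bar>q i\<bar> \<le> (\<Sum>i<k. \<bar>q i\<bar>)" by (intro member_le_sum) auto
      then show "\<bar>q i\<bar> \<le> int (nat (\<Sum>i<k. \<bar>q i\<bar>))" by linarith
    qed
    then show "q \<in> (\<Union>N::nat. {q::nat\<Rightarrow>int. (\<forall>i\<ge>k. q i = 0) \<and> (\<forall>i<k. \<bar>q i\<bar> \<le> int N)})"
      using q by blast
  qed
  moreover have "countable (\<Union>N::nat. {q::nat\<Rightarrow>int. (\<forall>i\<ge>k. q i = 0) \<and> (\<forall>i<k. \<bar>q i\<bar> \<le> int N)})"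
  proof (rule countable_UN)
    fix N :: nat
    show "countable {q::nat\<Rightarrow>int. (\<forall>i\<ge>k. q i = 0) \<and> (\<forall>i<k. \<bar>q i\<bar> \<le> int N)}"
      by (rule countable_finite, rule box_finite)
  qed simp
  ultimately show ?thesis by (rule countable_subset)
qed

lemma Qs_infinite: "0 < k \<Longrightarrow> infinite {q::nat\<Rightarrow>int. \<forall>i\<ge>k. q i = 0}"
proof
  assume k: "0 < k" and fin: "finite {q::nat\<Rightarrow>int. \<forall>i\<ge>k. q i = 0}"
  let ?g = "\<lambda>z::int. (\<lambda>i::nat. if i = 0 then z else 0)"
  have "?g ` UNIV \<subseteq> {q::nat\<Rightarrow>int. \<forall>i\<ge>k. q i = 0}" using k by auto
  then have "finite (?g ` UNIV)" using fin by (rule finite_subset)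
  moreover have "inj ?g" by (auto simp: inj_on_def fun_eq_iff)
  ultimately have "finite (UNIV :: int set)" using finite_imageD by blast
  then show False by simp
qed


lemma main_ae:
  fixes b :: "nat \<Rightarrow> real" and m :: nat and v a M :: real
  assumes m: "0 < m" and b: "b \<notin> W_plus (real (Suc m)) m" and v: "v > real (Suc m)"
    and a: "a > 0" and M: "M > 0"
  shows "AE x in lborel. a \<le> \<bar>x\<bar> \<and> \<bar>x\<bar> \<le> M \<longrightarrow>
           (\<lambda>i. if i = 0 then x else b (i - 1) * x) \<notin> W v (Suc m)"
proof -
  define Qs where "Qs = {q::nat\<Rightarrow>int. \<forall>i\<ge>Suc m. q i = 0}"
  define Bad where "Bad = {q::nat\<Rightarrow>int. (\<forall>i\<ge>Suc m. q i = 0) \<and> (supnorm (Suc m) q < 2 \<or>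
            \<bar>rr b m q\<bar> \<le> supnorm (Suc m) q powr (-v) / a)}"
  have Badfin: "finite Bad" unfolding Bad_def using bad_finite[OF m b v a] .
  define A where "A = (\<lambda>q. if q \<in> Qs \<and> q \<notin> Bad then Tset M (rr b m q) (supnorm (Suc m) q powr (-v)) else {})"
  have A_sets: "A q \<in> sets lborel" for q unfolding A_def using Tset_sets by (simp del: sets_lborel)
  have A_fin: "emeasure lborel (A q) < \<infinity>" for q unfolding A_def using Tset_fin by simp
  have A_meas: "measure lborel (A q) \<le> (if q \<in> Bad then 0 else 24 * M * supnorm (Suc m) q powr (-v))" for q
    unfolding A_def using Tset_measure[OF M] M by auto
  have cQ: "countable Qs" unfolding Qs_def by (rule Qs_countable)
  have iQ: "infinite Qs" unfolding Qs_def by (rule Qs_infinite) simp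
  define e where "e = from_nat_into Qs"
  have bij: "bij_betw e UNIV Qs" unfolding e_def using bij_betw_from_nat_into[OF cQ iQ] .
  then have e_inj: "inj e" and e_surj: "e ` UNIV = Qs" by (auto simp: bij_betw_def)
  obtain C where C: "\<And>F. finite F \<Longrightarrow> F \<subseteq> {q::nat\<Rightarrow>int. (\<forall>i\<ge>Suc m. q i = 0) \<and> q \<noteq> (\<lambda>_. 0)} \<Longrightarrow>
           (\<Sum>q\<in>F. supnorm (Suc m) q powr (-v)) \<le> C"
    using norm_sum_bound[of "Suc m" v] v by auto
  have summ: "summable (\<lambda>j. measure lborel (A (e j)))"
  proof (rule summableI_nonneg_bounded)
    fix N :: nat
    let ?E = "e ` {..<N}"
    have EQ: "?E \<subseteq> Qs" using e_surj by auto
    have "(\<Sum>j<N. measure lborel (A (e j))) = (\<Sum>q\<in>?E. measure lborel (A q))"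
      using e_inj by (simp add: sum.reindex inj_on_def)
    also have "\<dots> = (\<Sum>q\<in>?E - Bad. measure lborel (A q))"
      by (rule sum.mono_neutral_right) (auto simp: A_def)
    also have "\<dots> \<le> (\<Sum>q\<in>?E - Bad. 24 * M * supnorm (Suc m) q powr (-v))"
    proof (rule sum_mono)
      fix q assume "q \<in> ?E - Bad"
      then have "q \<notin> Bad" by simp
      then show "measure lborel (A q) \<le> 24 * M * supnorm (Suc m) q powr (-v)"
        using A_meas[of q] by (simp only: if_False)
    qed
    also have "\<dots> = 24 * M * (\<Sum>q\<in>?E - Bad. supnorm (Suc m) q powr (-v))"
      by (simp add: sum_distrib_left)
    also have "\<dots> \<le> 24 * M * C"
    proof (intro mult_left_mono C)
      show "?E - Bad \<subseteq> {q::nat\<Rightarrow>int. (\<forall>i\<ge>Suc m. q i = 0) \<and> q \<noteq> (\<lambda>_. 0)}"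
      proof
        fix q assume q: "q \<in> ?E - Bad"
        then have q0: "\<forall>i\<ge>Suc m. q i = 0" using EQ unfolding Qs_def by auto
        then have "supnorm (Suc m) q \<ge> 2" using q unfolding Bad_def by auto
        moreover have "supnorm (Suc m) (\<lambda>_. 0) \<le> 0" by (rule sn_le) auto
        ultimately have "q \<noteq> (\<lambda>_. 0)" by auto
        then show "q \<in> {q::nat\<Rightarrow>int. (\<forall>i\<ge>Suc m. q i = 0) \<and> q \<noteq> (\<lambda>_. 0)}" using q0 by auto
      qed
    qed (use M in auto)
    finally show "(\<Sum>j<N. measure lborel (A (e j))) \<le> 24 * M * C" .
  qed simp
  have BC: "AE x in lborel. eventually (\<lambda>j. x \<in> space lborel - A (e j)) sequentially"
    by (rule borel_cantelli_AE1) (simp_all only: A_sets A_fin summ)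
  show ?thesis
  proof (rule eventually_mono[OF BC], intro impI notI)
    fix x
    assume ev: "eventually (\<lambda>j. x \<in> space lborel - A (e j)) sequentially"
      and x: "a \<le> \<bar>x\<bar> \<and> \<bar>x\<bar> \<le> M"
      and W: "(\<lambda>i. if i = 0 then x else b (i - 1) * x) \<in> W v (Suc m)"
    obtain N0 where N0: "\<And>j. j \<ge> N0 \<Longrightarrow> x \<notin> A (e j)"
      using ev by (auto simp: eventually_sequentially)
    let ?S = "{q :: nat \<Rightarrow> int. (\<forall>i\<ge>Suc m. q i = 0) \<and>
      (\<exists>p :: int. \<bar>(\<Sum>i<Suc m. (if i = 0 then x else b (i - 1) * x) * real_of_int (q i)) + real_of_int p\<bar>
                    \<le> supnorm (Suc m) q powr (- v))}"
    have inf: "infinite ?S" using W unfolding W_def by simp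
    have "?S \<subseteq> Bad \<union> e ` {..<N0}"
    proof
      fix q assume qS: "q \<in> ?S"
      show "q \<in> Bad \<union> e ` {..<N0}"
      proof (cases "q \<in> Bad")
        case False
        have qQ: "q \<in> Qs" using qS unfolding Qs_def by auto
        then obtain j where j: "q = e j" using e_surj by auto
        obtain p :: int where p: "\<bar>x * rr b m q + real_of_int p\<bar> \<le> supnorm (Suc m) q powr (- v)"
          using qS unfolding dot_eq by blast
        have s2: "supnorm (Suc m) q \<ge> 2" and r: "\<bar>rr b m q\<bar> > supnorm (Suc m) q powr (-v) / a"
          using False qQ unfolding Bad_def Qs_def by auto
        have "x \<in> Tset M (rr b m q) (supnorm (Suc m) q powr (-v))"
          by (rule Tset_cover[OF M a _ _ r _ _ p]) (use x s2 v delta_small in auto)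
        then have "x \<in> A (e j)" using qQ False j unfolding A_def by auto
        then have "j < N0" using N0 by (meson not_le)
        then show ?thesis using j by auto
      qed simp
    qed
    moreover have "finite (Bad \<union> e ` {..<N0})" using Badfin by simp
    ultimately show False using inf finite_subset by blast
  qed
qed


theorem proposition4p7:
  fixes n :: nat and b :: "nat \<Rightarrow> real"
  assumes "n \<ge> 2"
    and "b \<notin> W_plus (real n) (n - 1)"
  shows "extremal n (\<lambda>x. (\<lambda>i. if i = 0 then x else b (i - 1) * x))"
proof -
  obtain m where nm: "n = Suc m" and m: "0 < m" using assms(1) by (cases n) auto
  have b: "b \<notin> W_plus (real (Suc m)) m" using assms(2) nm by simp
  have H: "AE x in lborel. \<forall>k::nat. \<forall>j::nat. 1 / real (Suc k) \<le> \<bar>x\<bar> \<and> \<bar>x\<bar> \<le> real (Suc k) \<longrightarrow>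
           (\<lambda>i. if i = 0 then x else b (i - 1) * x) \<notin> W (real (Suc m) + 1 / real (Suc j)) (Suc m)"
  proof (subst AE_all_countable, intro allI, subst AE_all_countable, intro allI)
    fix k j :: nat
    show "AE x in lborel. 1 / real (Suc k) \<le> \<bar>x\<bar> \<and> \<bar>x\<bar> \<le> real (Suc k) \<longrightarrow>
           (\<lambda>i. if i = 0 then x else b (i - 1) * x) \<notin> W (real (Suc m) + 1 / real (Suc j)) (Suc m)"
      by (rule main_ae[OF m b]) auto
  qed
  have "AE x in lborel. \<not> VWA n (\<lambda>i. if i = 0 then x else b (i - 1) * x)"
  proof (rule eventually_mono[OF eventually_conj[OF H AE_lborel_singleton[of 0]]])
    fix x :: real
    assume hx: "(\<forall>k::nat. \<forall>j::nat. 1 / real (Suc k) \<le> \<bar>x\<bar> \<and> \<bar>x\<bar> \<le> real (Suc k) \<longrightarrow>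
           (\<lambda>i. if i = 0 then x else b (i - 1) * x) \<notin> W (real (Suc m) + 1 / real (Suc j)) (Suc m)) \<and> x \<noteq> 0"
    define k where "k = nat \<lceil>max \<bar>x\<bar> (1/\<bar>x\<bar>)\<rceil>"
    have x0: "\<bar>x\<bar> > 0" using hx by simp
    have k1: "\<bar>x\<bar> \<le> real (Suc k)" "1/\<bar>x\<bar> \<le> real (Suc k)" unfolding k_def by linarith+
    have k2: "1 / real (Suc k) \<le> \<bar>x\<bar>"
      using k1(2) x0 by (simp add: field_simps)
    show "\<not> VWA n (\<lambda>i. if i = 0 then x else b (i - 1) * x)"
    proof
      assume "VWA n (\<lambda>i. if i = 0 then x else b (i - 1) * x)"
      then obtain v where v: "v > real n" "(\<lambda>i. if i = 0 then x else b (i - 1) * x) \<in> W v n"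
        unfolding VWA_def by auto
      obtain j0 :: nat where j0: "j0 > 0" "inverse (real j0) < v - real n"
        using ex_inverse_of_nat_less[of "v - real n"] v(1) by auto
      define j where "j = j0 - 1"
      have j: "inverse (real (Suc j)) < v - real n" using j0 unfolding j_def by simp
      have "W v n \<subseteq> W (real n + 1 / real (Suc j)) n"
        using j by (intro W_mono) (simp add: inverse_eq_divide)
      then show False using v(2) hx k1 k2 nm by auto
    qed
  qed
  then show ?thesis unfolding extremal_def .
qed

end
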